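(* The operad $\mathrm{Prim}\,\mathcal Mag$ (and also the operad $\mathrm{Prim}\,\mathcal Mag_\omega$) cannot be generated by binary and ternary operations; i.e. $\mathrm{Prim}\,\mathcal Mag(4)$ (resp. $\mathrm{Prim}\,\mathcal Mag_\omega(4)$) is not contained in the span of the elements obtained from elements of arity $2$ and $3$ by iterated operadic composition (substitution) and the symmetric group actions.
   Context: $K$ is a field of characteristic $0$. A planar rooted tree is reduced if no vertex has exactly one incoming edge. $K\{x_1,\dots,x_n\}_\infty$ is the $K$-vector space with basis the empty tree $1$ and all planar reduced rooted trees with leaves labelled by $x_1,\dots,x_n$; for $k\ge2$, $\vee^k$ grafts $k$ nonempty trees (in order) onto a new root, extended multilinearly, with unit conventions (arguments $1$ omitted, $\vee^1=\mathrm{id}$, $\vee^k(1,\dots,1)=1$); it is the free unitary $\mathcal Mag_\omega$-algebra. $K\{x_1,\dots,x_n\}$ is its subspace spanned by $1$ and binary trees, the free unitary magma algebra with $a\cdot b=\vee^2(a,b)$. Tensor squares carry the operations componentwise, and the co-addition $\Delta_a$ is the unique unital homomorphism with $\Delta_a(x_i)=x_i\otimes1+1\otimes x_i$; $f$ is primitive if $\Delta_a(f)=f\otimes1+1\otimes f$. $\mathrm{Prim}\,\mathcal Mag(n)$ (resp. $\mathrm{Prim}\,\mathcal Mag_\omega(n)$) is the space of primitive multilinear elements of degree $n$ in $x_1,\dots,x_n$ of $K\{x_1,\dots,x_n\}$ (resp. $K\{x_1,\dots,x_n\}_\infty$); these form operads whose composition is substitution of primitive elements for the variables, with $\Sigma_n$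 acting by permuting variables. *)

theory Defs
  imports "HOL-Combinatorics.Permutations"
begin

text \<open>Nonempty planar rooted trees with leaves labelled by natural numbers
  (variable x_i is Leaf i).  The empty tree 1 is represented by None in
  the type tree option.\<close>
datatype tree = Leaf nat | Node "tree list"

fun is_reduced :: "tree \<Rightarrow> bool" where
  "is_reduced (Leaf i) = True"
| "is_reduced (Node ts) = (2 \<le> length ts \<and> (\<forall>t\<in>set ts. is_reduced t))"

fun is_binary :: "tree \<Rightarrow> bool" where
  "is_binary (Leaf i) = True"
| "is_binary (Node ts) = (length ts = 2 \<and> (\<forall>t\<in>set ts. is_binary t))"

fun leaves :: "tree \<Rightarrow> nat list" where
  "leaves (Leaf i) = [i]"
| "leaves (Node ts) = concat (map leaves ts)"

definition multilinear :: "nat \<Rightarrow> tree \<Rightarrow> bool" where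
  "multilinear n T \<longleftrightarrow> mset (leaves T) = mset [1..<n+1]"

text \<open>Grafting with the unit conventions: arguments equal to 1 are omitted,
  grafting one tree is the identity, grafting only units gives 1.\<close>
definition graft :: "tree option list \<Rightarrow> tree option" where
  "graft xs = (let ys = List.map_filter id xs in
     (case ys of [] \<Rightarrow> None | [t] \<Rightarrow> Some t | _ \<Rightarrow> Some (Node ys)))"

text \<open>Co-addition on a basis tree, as the (unital, Mag_omega-homomorphic)
  extension of x_i |-> x_i (x) 1 + 1 (x) x_i; the result is the list of basis
  tensors occurring (each with coefficient 1, repetitions counted).\<close>
fun delta :: "tree \<Rightarrow> (tree option \<times> tree option) list" where
  "delta (Leaf i) = [(Some (Leaf i), None), (None, Some (Leaf i))]"
| "delta (Node ts) = map (\<lambda>ps. (graft (map fst ps), graft (map snd ps)))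
                        (product_lists (map delta ts))"

text \<open>Elements of the free algebra without unit component: coefficient functions.\<close>
type_synonym 'a elem = "tree \<Rightarrow> 'a"

definition supp :: "'a::zero elem \<Rightarrow> tree set" where
  "supp f = {T. f T \<noteq> 0}"

definition coadd :: "'a::semiring_1 elem \<Rightarrow> (tree option \<times> tree option) \<Rightarrow> 'a" where
  "coadd f p = (\<Sum>T\<in>supp f. f T * of_nat (count_list (delta T) p))"

definition prim_rhs :: "'a::zero elem \<Rightarrow> (tree option \<times> tree option) \<Rightarrow> 'a" where
  "prim_rhs f p = (case p of (Some t, None) \<Rightarrow> f t | (None, Some t) \<Rightarrow> f t | _ \<Rightarrow> 0)"

definition primitive :: "'a::semiring_1 elem \<Rightarrow> bool" where
  "primitive f \<longleftrightarrow> (\<forall>p. coadd f p = prim_rhs f p)"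

definition PrimOmega :: "nat \<Rightarrow> 'a::semiring_1 elem set" where
  "PrimOmega n = {f. (\<forall>T\<in>supp f. is_reduced T \<and> multilinear n T) \<and> primitive f}"

definition PrimMag :: "nat \<Rightarrow> 'a::semiring_1 elem set" where
  "PrimMag n = {f. (\<forall>T\<in>supp f. is_binary T \<and> multilinear n T) \<and> primitive f}"

fun relabel :: "(nat \<Rightarrow> tree) \<Rightarrow> tree \<Rightarrow> tree" where
  "relabel s (Leaf i) = s i"
| "relabel s (Node ts) = Node (map (relabel s) ts)"

definition pcomp_tree :: "nat \<Rightarrow> nat \<Rightarrow> tree \<Rightarrow> tree \<Rightarrow> tree" where
  "pcomp_tree i k T1 T2 = relabel (\<lambda>j. if j < i then Leaf j
        else if j = i then relabel (\<lambda>l. Leaf (l + i - 1)) T2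
        else Leaf (j + k - 1)) T1"

definition pcomp :: "nat \<Rightarrow> nat \<Rightarrow> 'a::semiring_1 elem \<Rightarrow> 'a elem \<Rightarrow> 'a elem" where
  "pcomp i k f g T = (\<Sum>(T1,T2)\<in>{(T1,T2). T1 \<in> supp f \<and> T2 \<in> supp g \<and> pcomp_tree i k T1 T2 = T}.
                         f T1 * g T2)"

definition act :: "(nat \<Rightarrow> nat) \<Rightarrow> 'a elem \<Rightarrow> 'a elem" where
  "act \<sigma> f T = f (relabel (\<lambda>j. Leaf (\<sigma> j)) T)"

inductive_set gen :: "(nat \<Rightarrow> 'a::semiring_1 elem set) \<Rightarrow> (nat \<times> 'a elem) set"
  for P :: "nat \<Rightarrow> 'a elem set" where
  base: "n \<in> {2, 3} \<Longrightarrow> f \<in> P n \<Longrightarrow> (n, f) \<in> gen P"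
| comp: "(m, f) \<in> gen P \<Longrightarrow> (k, g) \<in> gen P \<Longrightarrow> 1 \<le> i \<Longrightarrow> i \<le> m
          \<Longrightarrow> (m + k - 1, pcomp i k f g) \<in> gen P"
| perm: "(n, f) \<in> gen P \<Longrightarrow> \<sigma> permutes {1..n} \<Longrightarrow> (n, act \<sigma> f) \<in> gen P"
| add: "(n, f) \<in> gen P \<Longrightarrow> (n, g) \<in> gen P \<Longrightarrow> (n, \<lambda>T. f T + g T) \<in> gen P"
| smult: "(n, f) \<in> gen P \<Longrightarrow> (n, \<lambda>T. c * f T) \<in> gen P"

end

theory Submission
  imports Defs
begin

fun shp :: "tree \<Rightarrow> tree" where
  "shp (Leaf i) = Leaf 0"
| "shp (Node ts) = Node (map shp ts)"

definition B0 :: tree where "B0 = Node [Node [Leaf 0, Leaf 0], Node [Leaf 0, Leaf 0]]"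

definition bal :: "tree \<Rightarrow> bool" where "bal T \<longleftrightarrow> shp T = B0"

definition N12 :: tree where "N12 = Node [Leaf 1, Leaf 2]"
definition N21 :: tree where "N21 = Node [Leaf 2, Leaf 1]"

definition phi :: "'a::comm_ring_1 elem \<Rightarrow> 'a" where
  "phi h = (\<Sum>T\<in>{T\<in>supp h. bal T}. h T)"

definition good2 :: "'a::comm_ring_1 elem \<Rightarrow> bool" where
  "good2 f \<longleftrightarrow> finite (supp f) \<and> supp f \<subseteq> {N12, N21} \<and> f N21 = - f N12"

definition ginv :: "nat \<Rightarrow> 'a::comm_ring_1 elem \<Rightarrow> bool" where
  "ginv n f \<longleftrightarrow> 2 \<le> n \<and> finite (supp f) \<and> (n = 2 \<longrightarrow> good2 f) \<and> (n = 4 \<longrightarrow> phi f = 0)"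

lemma phi_sup:
  assumes "finite S" "supp h \<subseteq> S"
  shows "phi h = (\<Sum>T\<in>{T\<in>S. bal T}. h T)"
  unfolding phi_def
  by (rule sum.mono_neutral_left) (use assms in \<open>auto simp: supp_def\<close>)

lemma relabel_relabel: "relabel s (relabel s' T) = relabel (\<lambda>j. relabel s (s' j)) T"
  by (induction T) auto

lemma relabel_Leaf: "relabel Leaf T = T"
  by (induction T) (auto intro: map_idI)

lemma shp_relabel_cong: "(\<And>j. shp (s j) = shp (s' j)) \<Longrightarrow> shp (relabel s T) = shp (relabel s' T)"
  by (induction T) auto

lemma shp_relabel_Leaf: "shp (relabel (\<lambda>j. Leaf (\<tau> j)) T) = shp T"
  by (induction T) auto

lemma bal_relabel_Leaf: "bal (relabel (\<lambda>j. Leaf (\<tau> j)) T) = bal T"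
  by (simp add: bal_def shp_relabel_Leaf)

lemma supp_pcomp:
  "supp (pcomp i k f g) \<subseteq> (\<lambda>(a,b). pcomp_tree i k a b) ` (supp f \<times> supp g)"
proof
  fix T assume "T \<in> supp (pcomp i k f g)"
  then have "pcomp i k f g T \<noteq> 0" by (simp add: supp_def)
  then have "{(T1,T2). T1 \<in> supp f \<and> T2 \<in> supp g \<and> pcomp_tree i k T1 T2 = T} \<noteq> {}"
    unfolding pcomp_def by (metis sum.empty)
  then show "T \<in> (\<lambda>(a,b). pcomp_tree i k a b) ` (supp f \<times> supp g)" by force
qed

lemma finite_supp_pcomp:
  "finite (supp f) \<Longrightarrow> finite (supp g) \<Longrightarrow> finite (supp (pcomp i k f g))"
  by (rule finite_subset[OF supp_pcomp]) auto

lemma phi_pcomp: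
  fixes f g :: "'a::comm_ring_1 elem"
  assumes ff: "finite (supp f)" and fg: "finite (supp g)"
  shows "phi (pcomp i k f g) =
    (\<Sum>x\<in>{x\<in>supp f \<times> supp g. bal (pcomp_tree i k (fst x) (snd x))}. f (fst x) * g (snd x))"
proof -
  let ?SS = "supp f \<times> supp g"
  let ?pt = "\<lambda>x. pcomp_tree i k (fst x) (snd x)"
  let ?U = "?pt ` ?SS"
  have fSS: "finite ?SS" using ff fg by auto
  have "phi (pcomp i k f g) = (\<Sum>T\<in>{T\<in>?U. bal T}. pcomp i k f g T)"
    by (rule phi_sup) (use fSS supp_pcomp[of i k f g] in \<open>auto simp: case_prod_beta\<close>)
  also have "\<dots> = (\<Sum>T\<in>{T\<in>?U. bal T}. \<Sum>x\<in>?SS. if ?pt x = T then f (fst x) * g (snd x) else 0)"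
  proof (rule sum.cong[OF refl])
    fix T
    have "pcomp i k f g T = (\<Sum>x\<in>{x\<in>?SS. ?pt x = T}. f (fst x) * g (snd x))"
      unfolding pcomp_def
      by (rule sum.cong) (auto simp: case_prod_beta)
    also have "\<dots> = (\<Sum>x\<in>?SS. if ?pt x = T then f (fst x) * g (snd x) else 0)"
      by (rule sum.inter_filter[OF fSS])
    finally show "pcomp i k f g T = (\<Sum>x\<in>?SS. if ?pt x = T then f (fst x) * g (snd x) else 0)" .
  qed
  also have "\<dots> = (\<Sum>x\<in>?SS. \<Sum>T\<in>{T\<in>?U. bal T}. if ?pt x = T then f (fst x) * g (snd x) else 0)"
    by (rule sum.swap)
  also have "\<dots> = (\<Sum>x\<in>?SS. if bal (?pt x) then f (fst x) * g (snd x) else 0)"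
  proof (rule sum.cong[OF refl])
    fix x assume "x \<in> ?SS"
    have fU: "finite {T\<in>?U. bal T}" using fSS by auto
    show "(\<Sum>T\<in>{T\<in>?U. bal T}. if ?pt x = T then f (fst x) * g (snd x) else 0) =
          (if bal (?pt x) then f (fst x) * g (snd x) else 0)"
      using sum.delta'[OF fU, of "?pt x" "\<lambda>_. f (fst x) * g (snd x)"] \<open>x \<in> ?SS\<close> by auto
  qed
  also have "\<dots> = (\<Sum>x\<in>{x\<in>?SS. bal (?pt x)}. f (fst x) * g (snd x))"
    by (rule sum.inter_filter[OF fSS, symmetric])
  finally show ?thesis .
qed


lemma relabel_inv_bij:
  assumes "bij \<sigma>"
  shows "relabel (\<lambda>j. Leaf (\<sigma> j)) (relabel (\<lambda>j. Leaf (inv \<sigma> j)) T) = T"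
    and "relabel (\<lambda>j. Leaf (inv \<sigma> j)) (relabel (\<lambda>j. Leaf (\<sigma> j)) T) = T"
  using assms by (simp_all add: relabel_relabel bij_inv_eq_iff relabel_Leaf[unfolded]
     bij_is_surj surj_f_inv_f bij_is_inj inv_f_f)

lemma supp_act:
  assumes "bij \<sigma>"
  shows "supp (act \<sigma> f) = relabel (\<lambda>j. Leaf (inv \<sigma> j)) ` supp f"
proof -
  let ?R = "relabel (\<lambda>j. Leaf (\<sigma> j))" and ?R' = "relabel (\<lambda>j. Leaf (inv \<sigma> j))"
  show ?thesis
  proof (rule set_eqI, rule iffI)
    fix T assume "T \<in> supp (act \<sigma> f)"
    then have "?R T \<in> supp f" by (simp add: supp_def act_def)
    moreover have "T = ?R' (?R T)" using relabel_inv_bij(2)[OF assms] by simp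
    ultimately show "T \<in> ?R' ` supp f" by blast
  next
    fix T assume "T \<in> ?R' ` supp f"
    then obtain U where "U \<in> supp f" "T = ?R' U" by blast
    then show "T \<in> supp (act \<sigma> f)"
      using relabel_inv_bij(1)[OF assms] by (simp add: supp_def act_def)
  qed
qed

lemma phi_act:
  fixes f :: "'a::comm_ring_1 elem"
  assumes "bij \<sigma>" "finite (supp f)"
  shows "phi (act \<sigma> f) = phi f"
proof -
  let ?R = "relabel (\<lambda>j. Leaf (\<sigma> j))" and ?R' = "relabel (\<lambda>j. Leaf (inv \<sigma> j))"
  have inj: "inj ?R'" by (metis injI relabel_inv_bij(1)[OF assms(1)])
  have "{T\<in>supp (act \<sigma> f). bal T} = ?R' ` {T\<in>supp f. bal T}"
    unfolding supp_act[OF assms(1)] by (auto simp: bal_relabel_Leaf)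
  then have "phi (act \<sigma> f) = (\<Sum>T\<in>?R' ` {T\<in>supp f. bal T}. act \<sigma> f T)"
    by (simp add: phi_def)
  also have "\<dots> = (\<Sum>T\<in>{T\<in>supp f. bal T}. act \<sigma> f (?R' T))"
    by (rule sum.reindex[OF inj_on_subset[OF inj subset_UNIV], unfolded comp_def])
  also have "\<dots> = phi f"
    by (simp add: phi_def act_def relabel_inv_bij(1)[OF assms(1)])
  finally show ?thesis .
qed

lemma perm12:
  assumes "\<sigma> permutes {1,2::nat}"
  shows "(\<sigma> 1 = 1 \<and> \<sigma> 2 = 2) \<or> (\<sigma> 1 = 2 \<and> \<sigma> 2 = 1)"
proof -
  have "\<sigma> 1 \<in> {1,2}" "\<sigma> 2 \<in> {1,2}" using permutes_in_image[OF assms] by auto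
  moreover have "\<sigma> 1 \<noteq> \<sigma> 2"
  proof
    assume "\<sigma> 1 = \<sigma> 2"
    then have "(1::nat) = 2" using permutes_inj[OF assms] by (simp add: inj_eq)
    then show False by simp
  qed
  ultimately show ?thesis by auto
qed

lemma good2_act:
  fixes f :: "'a::comm_ring_1 elem"
  assumes "good2 f" "\<sigma> permutes {1..2}"
  shows "good2 (act \<sigma> f)"
proof -
  have e: "{1..2::nat} = {1,2}" by auto
  have p: "\<sigma> permutes {1,2}" using assms(2) e by simp
  have pi: "inv \<sigma> permutes {1,2}" using permutes_inv[OF p] .
  have b: "bij \<sigma>" using permutes_bij[OF p] .
  have g: "finite (supp f)" "supp f \<subseteq> {N12, N21}" "f N21 = - f N12" using assms(1) by (auto simp: good2_def)
  have s: "supp (act \<sigma> f) \<subseteq> relabel (\<lambda>j. Leaf (inv \<sigma> j)) ` {N12, N21}"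
    unfolding supp_act[OF b] using g(2) by blast
  also have "\<dots> \<subseteq> {N12, N21}"
    using perm12[OF pi] by (auto simp: N12_def N21_def)
  finally have s2: "supp (act \<sigma> f) \<subseteq> {N12, N21}" .
  have fin: "finite (supp (act \<sigma> f))" using s2 finite_subset by blast
  have "act \<sigma> f N21 = - act \<sigma> f N12"
    using perm12[OF p] g(3) by (auto simp: act_def N12_def N21_def)
  then show ?thesis using s2 fin by (simp add: good2_def)
qed

lemma not_bal_23:
  assumes "i \<in> {1,2}" "a \<in> {N12, N21}"
  shows "\<not> bal (pcomp_tree i k a b)"
  using assms by (auto simp: bal_def B0_def pcomp_tree_def N12_def N21_def)

lemma bal_swap: "bal (pcomp_tree i 2 a N12) = bal (pcomp_tree i 2 a N21)"
  unfolding bal_def pcomp_tree_def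
  by (rule arg_cong[where f="\<lambda>x. x = B0"], rule shp_relabel_cong) (simp add: N12_def N21_def)

lemma gen_inv:
  fixes P :: "nat \<Rightarrow> 'a::comm_ring_1 elem set"
  assumes P2: "\<And>f. f \<in> P 2 \<Longrightarrow> good2 f"
    and P3: "\<And>f. f \<in> P 3 \<Longrightarrow> finite (supp f)"
  shows "(n, f) \<in> gen P \<Longrightarrow> ginv n f"
proof (induction rule: gen.induct)
  case (base n f)
  then show ?case using P2 P3 by (auto simp: ginv_def good2_def)
next
  case (comp m f k g i)
  have m2: "2 \<le> m" and k2: "2 \<le> k" and ff: "finite (supp f)" and fg: "finite (supp g)"
    using comp.IH by (auto simp: ginv_def)
  have fin: "finite (supp (pcomp i k f g))" using finite_supp_pcomp[OF ff fg] .
  have "phi (pcomp i k f g) = 0" if n4: "m + k - 1 = 4"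
  proof -
    let ?A = "{x\<in>supp f \<times> supp g. bal (pcomp_tree i k (fst x) (snd x))}"
    have ph: "phi (pcomp i k f g) = (\<Sum>x\<in>?A. f (fst x) * g (snd x))"
      by (rule phi_pcomp[OF ff fg])
    from n4 m2 k2 have "(m = 2 \<and> k = 3) \<or> (m = 3 \<and> k = 2)" by arith
    then show ?thesis
    proof
      assume mk: "m = 2 \<and> k = 3"
      then have "good2 f" using comp.IH by (auto simp: ginv_def)
      then have sf: "supp f \<subseteq> {N12, N21}" by (simp add: good2_def)
      have i12: "i \<in> {1,2}" using comp.hyps mk by auto
      have "\<forall>x\<in>supp f \<times> supp g. \<not> bal (pcomp_tree i k (fst x) (snd x))"
      proof
        fix x assume "x \<in> supp f \<times> supp g"
        then have "fst x \<in> {N12, N21}" using sf by auto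
        then show "\<not> bal (pcomp_tree i k (fst x) (snd x))" by (rule not_bal_23[OF i12])
      qed
      then have e: "?A = {}" by blast
      show ?thesis unfolding ph e by simp
    next
      assume mk: "m = 3 \<and> k = 2"
      then have "good2 g" using comp.IH by (auto simp: ginv_def)
      then have sg: "supp g \<subseteq> {N12, N21}" and ag: "g N21 = - g N12" by (auto simp: good2_def)
      have "(\<Sum>x\<in>?A. f (fst x) * g (snd x)) =
          (\<Sum>x\<in>supp f \<times> supp g. if bal (pcomp_tree i k (fst x) (snd x)) then f (fst x) * g (snd x) else 0)"
        using ff fg by (intro sum.inter_filter) auto
      also have "\<dots> = (\<Sum>a\<in>supp f. \<Sum>b\<in>supp g. if bal (pcomp_tree i k a b) then f a * g b else 0)"
        by (simp add: sum.cartesian_product case_prod_beta)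
      also have "\<dots> = (\<Sum>a\<in>supp f. \<Sum>b\<in>{N12, N21}. if bal (pcomp_tree i k a b) then f a * g b else 0)"
      proof (rule sum.cong[OF refl])
        fix a
        show "(\<Sum>b\<in>supp g. if bal (pcomp_tree i k a b) then f a * g b else 0) =
              (\<Sum>b\<in>{N12, N21}. if bal (pcomp_tree i k a b) then f a * g b else 0)"
          by (rule sum.mono_neutral_left) (use sg in \<open>auto simp: supp_def\<close>)
      qed
      also have "\<dots> = 0"
      proof (rule sum.neutral, rule ballI)
        fix a
        have ne: "N12 \<noteq> N21" by (simp add: N12_def N21_def)
        have "(\<Sum>b\<in>{N12, N21}. if bal (pcomp_tree i k a b) then f a * g b else 0) =
          (if bal (pcomp_tree i k a N12) then f a * g N12 else 0) +
          (if bal (pcomp_tree i k a N21) then f a * g N21 else 0)"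
          using ne by simp
        also have "\<dots> = 0" using bal_swap[of i a] mk ag by simp
        finally show "(\<Sum>b\<in>{N12, N21}. if bal (pcomp_tree i k a b) then f a * g b else 0) = 0" .
      qed
      finally show ?thesis using ph by simp
    qed
  qed
  then show ?case using m2 k2 fin by (auto simp: ginv_def)
next
  case (perm n f \<sigma>)
  have b: "bij \<sigma>" using permutes_bij[OF perm.hyps(2)] .
  have ff: "finite (supp f)" using perm.IH by (simp add: ginv_def)
  have fin: "finite (supp (act \<sigma> f))" using ff by (simp add: supp_act[OF b])
  show ?case using perm.IH fin phi_act[OF b ff] good2_act[of f \<sigma>] perm.hyps(2)
    by (auto simp: ginv_def)
next
  case (add n f g)
  have ff: "finite (supp f)" and fg: "finite (supp g)" using add.IH by (auto simp: ginv_def)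
  let ?h = "\<lambda>T. f T + g T"
  have sh: "supp ?h \<subseteq> supp f \<union> supp g" by (auto simp: supp_def)
  have fin: "finite (supp ?h)" using ff fg sh finite_subset by blast
  have fu: "finite (supp f \<union> supp g)" using ff fg by simp
  have "phi ?h = phi f + phi g"
    using phi_sup[OF fu sh] phi_sup[OF fu, of f] phi_sup[OF fu, of g]
    by (simp add: sum.distrib)
  then show ?case using add.IH fin sh by (auto simp: ginv_def good2_def)
next
  case (smult n f c)
  have ff: "finite (supp f)" using smult.IH by (auto simp: ginv_def)
  let ?h = "\<lambda>T. c * f T"
  have sh: "supp ?h \<subseteq> supp f" by (auto simp: supp_def)
  have fin: "finite (supp ?h)" using ff sh finite_subset by blast
  have "phi ?h = c * phi f"
    using phi_sup[OF ff sh] by (simp add: phi_def sum_distrib_left)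
  then show ?case using smult.IH fin sh by (auto simp: ginv_def good2_def)
qed


lemma prim_finite:
  fixes f :: "'a::semiring_1 elem"
  assumes "primitive f"
  shows "finite (supp f)"
proof (rule ccontr)
  assume inf: "infinite (supp f)"
  have "f t = 0" for t
  proof -
    have "f t = prim_rhs f (Some t, None)" by (simp add: prim_rhs_def)
    also have "\<dots> = coadd f (Some t, None)" using assms by (simp add: primitive_def)
    also have "\<dots> = 0" using inf by (simp add: coadd_def)
    finally show ?thesis .
  qed
  then have "supp f = {}" by (simp add: supp_def)
  then show False using inf by simp
qed

lemma leaves_ge1: "is_reduced t \<Longrightarrow> 1 \<le> length (leaves t)"
proof (induction t)
  case (Leaf x)
  then show ?case by simp
next
  case (Node ts)
  then have "length ts \<le> sum_list (map (\<lambda>t. length (leaves t)) ts)"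
    using sum_list_mono[of ts "\<lambda>_. 1::nat" "\<lambda>t. length (leaves t)"]
    by (simp add: sum_list_triv)
  then show ?case using Node.prems by (simp add: length_concat comp_def)
qed

lemma node_len: "is_reduced (Node ts) \<Longrightarrow> length ts \<le> length (leaves (Node ts))"
  using sum_list_mono[of ts "\<lambda>_. 1::nat" "\<lambda>t. length (leaves t)"] leaves_ge1
  by (simp add: sum_list_triv length_concat comp_def)

lemma red_len1: "is_reduced t \<Longrightarrow> length (leaves t) = 1 \<Longrightarrow> \<exists>x. t = Leaf x"
proof (cases t)
  case (Node ts)
  assume "is_reduced t" "length (leaves t) = 1"
  then show ?thesis using node_len[of ts] Node by simp
qed simp

lemma red2:
  assumes "is_reduced T" "multilinear 2 T"
  shows "T = N12 \<or> T = N21"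
proof -
  have m: "mset (leaves T) = {#1, 2#}" using assms(2) by (simp add: multilinear_def numeral_2_eq_2)
  then have l2: "length (leaves T) = 2" by (metis size_mset size_add_mset size_empty numeral_2_eq_2 One_nat_def)
  show ?thesis
  proof (cases T)
    case (Leaf x)
    then show ?thesis using l2 by simp
  next
    case (Node ts)
    have "length ts \<ge> 2" using assms(1) Node by simp
    moreover have "length ts \<le> 2" using node_len[of ts] assms(1) Node l2 by simp
    ultimately have "length ts = 2" by simp
    then obtain a b where ts: "ts = [a, b]"
      by (metis (no_types, opaque_lifting) One_nat_def Suc_1 length_0_conv length_Suc_conv)
    have ra: "is_reduced a" and rb: "is_reduced b" using assms(1) Node ts by auto
    have "length (leaves a) + length (leaves b) = 2" using l2 Node ts by simp
    then have "length (leaves a) = 1" "length (leaves b) = 1"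
      using leaves_ge1[OF ra] leaves_ge1[OF rb] by auto
    then obtain x y where "a = Leaf x" "b = Leaf y" using red_len1 ra rb by metis
    then have T: "T = Node [Leaf x, Leaf y]" and "{#x, y#} = {#1, 2#}" using Node ts m by auto
    then have "(x = 1 \<and> y = 2) \<or> (x = 2 \<and> y = 1)"
      by (auto simp: add_eq_conv_ex)
    then show ?thesis using T by (auto simp: N12_def N21_def)
  qed
qed

lemma binary_reduced: "is_binary t \<Longrightarrow> is_reduced t"
  by (induction t) auto

lemma good2_prim:
  fixes f :: "'a::comm_ring_1 elem"
  assumes "\<forall>T\<in>supp f. is_reduced T \<and> multilinear 2 T" "primitive f"
  shows "good2 f"
proof -
  have fin: "finite (supp f)" using prim_finite[OF assms(2)] .
  have s: "supp f \<subseteq> {N12, N21}" using assms(1) red2 by blast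
  let ?p = "(Some (Leaf 1), Some (Leaf 2))"
  have "0 = coadd f ?p" using assms(2) by (simp add: primitive_def prim_rhs_def)
  also have "\<dots> = (\<Sum>T\<in>{N12, N21}. f T * of_nat (count_list (delta T) ?p))"
    unfolding coadd_def by (rule sum.mono_neutral_left) (use s in \<open>auto simp: supp_def\<close>)
  also have "\<dots> = f N12 + f N21"
    by (simp add: N12_def N21_def graft_def List.map_filter_def)
  finally have "f N21 = - f N12" by (simp add: eq_neg_iff_add_eq_0 add.commute)
  then show ?thesis using fin s by (simp add: good2_def)
qed

lemma prim_check:
  fixes f :: "'a::semiring_1 elem"
  assumes fin: "finite (supp f)"
    and Q: "\<forall>q\<in>(\<Union>T\<in>supp f. set (delta T)). coadd f q = prim_rhs f q"
    and L: "\<forall>t\<in>supp f. (Some t, None) \<in> set (delta t) \<and> (None, Some t) \<in> set (delta t)"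
  shows "primitive f"
  unfolding primitive_def
proof
  fix p
  show "coadd f p = prim_rhs f p"
  proof (cases "p \<in> (\<Union>T\<in>supp f. set (delta T))")
    case True then show ?thesis using Q by blast
  next
    case False
    then have "coadd f p = 0" by (auto simp: coadd_def intro!: sum.neutral)
    moreover have "prim_rhs f p = 0"
    proof -
      obtain a b where p: "p = (a, b)" by fastforce
      show ?thesis
      proof (cases a; cases b)
        fix t assume "a = Some t" "b = None"
        then show ?thesis using False L p by (force simp: prim_rhs_def supp_def)
      next
        fix t assume "a = None" "b = Some t"
        then show ?thesis using False L p by (force simp: prim_rhs_def supp_def)
      qed (auto simp: p prim_rhs_def)
    qed
    ultimately show ?thesis by simp
  qed
qed

definition t1 :: tree where "t1 = Node [Node [Leaf 4, Leaf 1], Node [Leaf 2, Leaf 3]]"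

definition t2 :: tree where "t2 = Node [Node [Node [Leaf 4, Leaf 1], Leaf 2], Leaf 3]"

definition t3 :: tree where "t3 = Node [Leaf 2, Node [Node [Leaf 1, Leaf 4], Leaf 3]]"

definition t4 :: tree where "t4 = Node [Node [Leaf 1, Node [Leaf 4, Leaf 2]], Leaf 3]"

definition t5 :: tree where "t5 = Node [Leaf 1, Node [Leaf 4, Node [Leaf 2, Leaf 3]]]"

definition t6 :: tree where "t6 = Node [Leaf 2, Node [Leaf 1, Node [Leaf 4, Leaf 3]]]"

lemma delta_t1: "delta t1 = [(Some (Node [Node [Leaf 4, Leaf 1], Node [Leaf 2, Leaf 3]]), None), (Some (Node [Node [Leaf 4, Leaf 1], Leaf 2]), Some (Leaf 3)), (Some (Node [Node [Leaf 4, Leaf 1], Leaf 3]), Some (Leaf 2)), (Some (Node [Leaf 4, Leaf 1]), Some (Node [Leaf 2, Leaf 3])), (Some (Node [Leaf 4, Node [Leaf 2, Leaf 3]]), Some (Leaf 1)), (Some (Node [Leaf 4, Leaf 2]), Some (Node [Leaf 1, Leaf 3])), (Some (Node [Leaf 4, Leaf 3]), Some (Node [Leaf 1, Leaf 2])), (Some (Leaf 4), Some (Node [Leaf 1, Node [Leaf 2, Leaf 3]])), (Some (Node [Leaf 1, Node [Leaf 2, Leaf 3]]), Some (Leaf 4)), (Some (Node [Leaf 1, Leaf 2]), Some (Node [Leaf 4, Leaf 3])), (Some (Node [Leaf 1, Leaf 3]), Some (Node [Leaf 4, Leaf 2])), (Some (Leaf 1), Some (Node [Leaf 4, Node [Leaf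 2, Leaf 3]])), (Some (Node [Leaf 2, Leaf 3]), Some (Node [Leaf 4, Leaf 1])), (Some (Leaf 2), Some (Node [Node [Leaf 4, Leaf 1], Leaf 3])), (Some (Leaf 3), Some (Node [Node [Leaf 4, Leaf 1], Leaf 2])), (None, Some (Node [Node [Leaf 4, Leaf 1], Node [Leaf 2, Leaf 3]]))]"
  by (simp add: t1_def graft_def List.map_filter_def)

lemma delta_t2: "delta t2 = [(Some (Node [Node [Node [Leaf 4, Leaf 1], Leaf 2], Leaf 3]), None), (Some (Node [Node [Leaf 4, Leaf 1], Leaf 2]), Some (Leaf 3)), (Some (Node [Node [Leaf 4, Leaf 1], Leaf 3]), Some (Leaf 2)), (Some (Node [Leaf 4, Leaf 1]), Some (Node [Leaf 2, Leaf 3])), (Some (Node [Node [Leaf 4, Leaf 2], Leaf 3]), Some (Leaf 1)), (Some (Node [Leaf 4, Leaf 2]), Some (Node [Leaf 1, Leaf 3])), (Some (Node [Leaf 4, Leaf 3]), Some (Node [Leaf 1, Leaf 2])), (Some (Leaf 4), Some (Node [Node [Leaf 1, Leaf 2], Leaf 3])), (Some (Node [Node [Leaf 1, Leaf 2], Leaf 3]), Some (Leaf 4)), (Some (Node [Leaf 1, Leaf 2]), Some (Node [Leaf 4, Leaf 3])), (Some (Node [Leaf 1, Leaf 3]), Some (Node [Leaf 4, Leaf 2])), (Some (Leaf 1), Some (Node [Node [Leaf 4, Leaf 2], Leaf 3])), (Some (Node [Leaf 2, Leaf 3]), Some (Node [Leaf 4, Leaf 1])), (Some (Leaf 2), Some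 (Node [Node [Leaf 4, Leaf 1], Leaf 3])), (Some (Leaf 3), Some (Node [Node [Leaf 4, Leaf 1], Leaf 2])), (None, Some (Node [Node [Node [Leaf 4, Leaf 1], Leaf 2], Leaf 3]))]"
  by (simp add: t2_def graft_def List.map_filter_def)

lemma delta_t3: "delta t3 = [(Some (Node [Leaf 2, Node [Node [Leaf 1, Leaf 4], Leaf 3]]), None), (Some (Node [Leaf 2, Node [Leaf 1, Leaf 4]]), Some (Leaf 3)), (Some (Node [Leaf 2, Node [Leaf 1, Leaf 3]]), Some (Leaf 4)), (Some (Node [Leaf 2, Leaf 1]), Some (Node [Leaf 4, Leaf 3])), (Some (Node [Leaf 2, Node [Leaf 4, Leaf 3]]), Some (Leaf 1)), (Some (Node [Leaf 2, Leaf 4]), Some (Node [Leaf 1, Leaf 3])), (Some (Node [Leaf 2, Leaf 3]), Some (Node [Leaf 1, Leaf 4])), (Some (Leaf 2), Some (Node [Node [Leaf 1, Leaf 4], Leaf 3])), (Some (Node [Node [Leaf 1, Leaf 4], Leaf 3]), Some (Leaf 2)), (Some (Node [Leaf 1, Leaf 4]), Some (Node [Leaf 2, Leaf 3])), (Some (Node [Leaf 1, Leaf 3]), Some (Node [Leaf 2, Leaf 4])), (Some (Leaf 1), Some (Node [Leaf 2, Node [Leaf 4, Leaf 3]])), (Some (Node [Leaf 4, Leaf 3]), Some (Node [Leaf 2, Leaf 1])), (Some (Leaf 4), Some (Node [Leaf 2, Node [Leaf 1, Leaf 3]])), (Some (Leaf 3), Some (Node [Leaf 2, Node [Leaf 1,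 Leaf 4]])), (None, Some (Node [Leaf 2, Node [Node [Leaf 1, Leaf 4], Leaf 3]]))]"
  by (simp add: t3_def graft_def List.map_filter_def)

lemma delta_t4: "delta t4 = [(Some (Node [Node [Leaf 1, Node [Leaf 4, Leaf 2]], Leaf 3]), None), (Some (Node [Leaf 1, Node [Leaf 4, Leaf 2]]), Some (Leaf 3)), (Some (Node [Node [Leaf 1, Leaf 4], Leaf 3]), Some (Leaf 2)), (Some (Node [Leaf 1, Leaf 4]), Some (Node [Leaf 2, Leaf 3])), (Some (Node [Node [Leaf 1, Leaf 2], Leaf 3]), Some (Leaf 4)), (Some (Node [Leaf 1, Leaf 2]), Some (Node [Leaf 4, Leaf 3])), (Some (Node [Leaf 1, Leaf 3]), Some (Node [Leaf 4, Leaf 2])), (Some (Leaf 1), Some (Node [Node [Leaf 4, Leaf 2], Leaf 3])), (Some (Node [Node [Leaf 4, Leaf 2], Leaf 3]), Some (Leaf 1)), (Some (Node [Leaf 4, Leaf 2]), Some (Node [Leaf 1, Leaf 3])), (Some (Node [Leaf 4, Leaf 3]), Some (Node [Leaf 1, Leaf 2])), (Some (Leaf 4), Some (Node [Node [Leaf 1, Leaf 2], Leaf 3])), (Some (Node [Leaf 2, Leaf 3]), Some (Node [Leaf 1, Leaf 4])), (Some (Leaf 2), Some (Node [Node [Leaf 1, Leaf 4], Leaf 3])), (Some (Leaf 3), Some (Node [Leaf 1, Node [Leaf 4, Leaf 2]])), (None, Some (Node [Node [Leaf 1, Node [Leaf 4, Leaf 2]], Leaf 3]))]"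
  by (simp add: t4_def graft_def List.map_filter_def)

lemma delta_t5: "delta t5 = [(Some (Node [Leaf 1, Node [Leaf 4, Node [Leaf 2, Leaf 3]]]), None), (Some (Node [Leaf 1, Node [Leaf 4, Leaf 2]]), Some (Leaf 3)), (Some (Node [Leaf 1, Node [Leaf 4, Leaf 3]]), Some (Leaf 2)), (Some (Node [Leaf 1, Leaf 4]), Some (Node [Leaf 2, Leaf 3])), (Some (Node [Leaf 1, Node [Leaf 2, Leaf 3]]), Some (Leaf 4)), (Some (Node [Leaf 1, Leaf 2]), Some (Node [Leaf 4, Leaf 3])), (Some (Node [Leaf 1, Leaf 3]), Some (Node [Leaf 4, Leaf 2])), (Some (Leaf 1), Some (Node [Leaf 4, Node [Leaf 2, Leaf 3]])), (Some (Node [Leaf 4, Node [Leaf 2, Leaf 3]]), Some (Leaf 1)), (Some (Node [Leaf 4, Leaf 2]), Some (Node [Leaf 1, Leaf 3])), (Some (Node [Leaf 4, Leaf 3]), Some (Node [Leaf 1, Leaf 2])), (Some (Leaf 4), Some (Node [Leaf 1, Node [Leaf 2, Leaf 3]])), (Some (Node [Leaf 2, Leaf 3]), Some (Node [Leaf 1, Leaf 4])), (Some (Leaf 2), Some (Node [Leaf 1, Node [Leaf 4, Leaf 3]])), (Some (Leaf 3), Some (Node [Leaf 1, Node [Leaf 4, Leaf 2]])), (None, Some (Node [Leaf 1, Node [Leaf 4, Node [Leaf 2, Leaf 3]]]))]"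
  by (simp add: t5_def graft_def List.map_filter_def)

lemma delta_t6: "delta t6 = [(Some (Node [Leaf 2, Node [Leaf 1, Node [Leaf 4, Leaf 3]]]), None), (Some (Node [Leaf 2, Node [Leaf 1, Leaf 4]]), Some (Leaf 3)), (Some (Node [Leaf 2, Node [Leaf 1, Leaf 3]]), Some (Leaf 4)), (Some (Node [Leaf 2, Leaf 1]), Some (Node [Leaf 4, Leaf 3])), (Some (Node [Leaf 2, Node [Leaf 4, Leaf 3]]), Some (Leaf 1)), (Some (Node [Leaf 2, Leaf 4]), Some (Node [Leaf 1, Leaf 3])), (Some (Node [Leaf 2, Leaf 3]), Some (Node [Leaf 1, Leaf 4])), (Some (Leaf 2), Some (Node [Leaf 1, Node [Leaf 4, Leaf 3]])), (Some (Node [Leaf 1, Node [Leaf 4, Leaf 3]]), Some (Leaf 2)), (Some (Node [Leaf 1, Leaf 4]), Some (Node [Leaf 2, Leaf 3])), (Some (Node [Leaf 1, Leaf 3]), Some (Node [Leaf 2, Leaf 4])), (Some (Leaf 1), Some (Node [Leaf 2, Node [Leaf 4, Leaf 3]])), (Some (Node [Leaf 4, Leaf 3]), Some (Node [Leaf 2, Leaf 1])), (Some (Leaf 4), Some (Node [Leaf 2, Node [Leaf 1, Leaf 3]])), (Some (Leaf 3), Some (Node [Leaf 2, Node [Leaf 1, Leaf 4]])), (None, Some (Node [Leaf 2, Node [Leaf 1, Node [Leaf 4, Leaf 3]]]))]"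
  by (simp add: t6_def graft_def List.map_filter_def)


definition psi :: "'a::comm_ring_1 elem" where
  "psi T = (if T = t1 then 1 else if T = t2 then -1 else if T = t3 then -1 else
            if T = t4 then 1 else if T = t5 then -1 else if T = t6 then 1 else 0)"

lemma supp_psi: "supp (psi :: 'a::comm_ring_1 elem) = {t1, t2, t3, t4, t5, t6}"
  by (auto simp: supp_def psi_def t1_def t2_def t3_def t4_def t5_def t6_def)

lemma coadd_psi: "coadd (psi :: 'a::comm_ring_1 elem) q =
   of_nat (count_list (delta t1) q) - of_nat (count_list (delta t2) q)
   - of_nat (count_list (delta t3) q) + of_nat (count_list (delta t4) q)
   - of_nat (count_list (delta t5) q) + of_nat (count_list (delta t6) q)"
  unfolding coadd_def supp_psi
  by (simp add: psi_def t1_def t2_def t3_def t4_def t5_def t6_def)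

lemma chk1: "\<forall>q\<in>set (delta t1). coadd (psi :: 'a::comm_ring_1 elem) q = prim_rhs psi q"
  unfolding coadd_psi
    by (simp add: delta_t1 delta_t2 delta_t3 delta_t4 delta_t5 delta_t6 prim_rhs_def psi_def)
       (simp add: t1_def t2_def t3_def t4_def t5_def t6_def)

lemma chk2: "\<forall>q\<in>set (delta t2). coadd (psi :: 'a::comm_ring_1 elem) q = prim_rhs psi q"
  unfolding coadd_psi
    by (simp add: delta_t1 delta_t2 delta_t3 delta_t4 delta_t5 delta_t6 prim_rhs_def psi_def)
       (simp add: t1_def t2_def t3_def t4_def t5_def t6_def)

lemma chk3: "\<forall>q\<in>set (delta t3). coadd (psi :: 'a::comm_ring_1 elem) q = prim_rhs psi q"
  unfolding coadd_psi
    by (simp add: delta_t1 delta_t2 delta_t3 delta_t4 delta_t5 delta_t6 prim_rhs_def psi_def)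
       (simp add: t1_def t2_def t3_def t4_def t5_def t6_def)

lemma chk4: "\<forall>q\<in>set (delta t4). coadd (psi :: 'a::comm_ring_1 elem) q = prim_rhs psi q"
  unfolding coadd_psi
    by (simp add: delta_t1 delta_t2 delta_t3 delta_t4 delta_t5 delta_t6 prim_rhs_def psi_def)
       (simp add: t1_def t2_def t3_def t4_def t5_def t6_def)

lemma chk5: "\<forall>q\<in>set (delta t5). coadd (psi :: 'a::comm_ring_1 elem) q = prim_rhs psi q"
  unfolding coadd_psi
    by (simp add: delta_t1 delta_t2 delta_t3 delta_t4 delta_t5 delta_t6 prim_rhs_def psi_def)
       (simp add: t1_def t2_def t3_def t4_def t5_def t6_def)

lemma chk6: "\<forall>q\<in>set (delta t6). coadd (psi :: 'a::comm_ring_1 elem) q = prim_rhs psi q"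
  unfolding coadd_psi
    by (simp add: delta_t1 delta_t2 delta_t3 delta_t4 delta_t5 delta_t6 prim_rhs_def psi_def)
       (simp add: t1_def t2_def t3_def t4_def t5_def t6_def)

lemma psi_prim: "primitive (psi :: 'a::comm_ring_1 elem)"
proof (rule prim_check)
  show "finite (supp (psi :: 'a elem))" by (simp add: supp_psi)
  show "\<forall>t\<in>supp (psi :: 'a elem). (Some t, None) \<in> set (delta t) \<and> (None, Some t) \<in> set (delta t)"
    unfolding supp_psi by (simp add: delta_t1 delta_t2 delta_t3 delta_t4 delta_t5 delta_t6)
      (simp add: t1_def t2_def t3_def t4_def t5_def t6_def)
  show "\<forall>q\<in>(\<Union>T\<in>supp psi. set (delta T)). coadd (psi :: 'a elem) q = prim_rhs psi q"
    unfolding supp_psi using chk1 chk2 chk3 chk4 chk5 chk6 by blast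
qed

lemma u4: "[1..<4+1] = [1,2,3,4::nat]" by code_simp

lemma ml4: "multilinear 4 T \<longleftrightarrow> mset (leaves T) = {#1,2,3,4#}"
  unfolding multilinear_def u4 by simp

lemma psi_Mag: "(psi :: 'a::comm_ring_1 elem) \<in> PrimMag 4"
  unfolding PrimMag_def using psi_prim
  by (simp add: supp_psi ml4 add_mset_commute t1_def t2_def t3_def t4_def t5_def t6_def)

lemma psi_Omega: "(psi :: 'a::comm_ring_1 elem) \<in> PrimOmega 4"
  unfolding PrimOmega_def using psi_prim
  by (simp add: supp_psi ml4 add_mset_commute t1_def t2_def t3_def t4_def t5_def t6_def)

lemma phi_psi: "phi (psi :: 'a::comm_ring_1 elem) = 1"
proof -
  have "{T\<in>supp (psi :: 'a elem). bal T} = {t1}"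
    unfolding supp_psi by (auto simp: bal_def B0_def t1_def t2_def t3_def t4_def t5_def t6_def)
  then show ?thesis by (simp add: phi_def psi_def)
qed

theorem corollary4p5p8:
  shows "\<not> (PrimMag 4 \<subseteq> {f :: 'a::field_char_0 elem. (4, f) \<in> gen PrimMag})
       \<and> \<not> (PrimOmega 4 \<subseteq> {f :: 'a::field_char_0 elem. (4, f) \<in> gen PrimOmega})"
proof
  show "\<not> (PrimMag 4 \<subseteq> {f :: 'a::field_char_0 elem. (4, f) \<in> gen PrimMag})"
  proof
    assume "PrimMag 4 \<subseteq> {f :: 'a::field_char_0 elem. (4, f) \<in> gen PrimMag}"
    then have "(4, psi :: 'a elem) \<in> gen PrimMag" using psi_Mag by blast
    then have "ginv 4 (psi :: 'a elem)"
    proof (rule gen_inv[rotated 2])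
      fix f :: "'a elem" assume "f \<in> PrimMag 2"
      then show "good2 f" by (intro good2_prim) (auto simp: PrimMag_def binary_reduced)
    next
      fix f :: "'a elem" assume "f \<in> PrimMag 3"
      then show "finite (supp f)" by (intro prim_finite) (simp add: PrimMag_def)
    qed
    then have "phi (psi :: 'a elem) = 0" by (simp add: ginv_def)
    then show False using phi_psi[where 'a='a] by simp
  qed
  show "\<not> (PrimOmega 4 \<subseteq> {f :: 'a::field_char_0 elem. (4, f) \<in> gen PrimOmega})"
  proof
    assume "PrimOmega 4 \<subseteq> {f :: 'a::field_char_0 elem. (4, f) \<in> gen PrimOmega}"
    then have "(4, psi :: 'a elem) \<in> gen PrimOmega" using psi_Omega by blast
    then have "ginv 4 (psi :: 'a elem)"
    proof (rule gen_inv[rotated 2])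
      fix f :: "'a elem" assume "f \<in> PrimOmega 2"
      then show "good2 f" by (intro good2_prim) (auto simp: PrimOmega_def)
    next
      fix f :: "'a elem" assume "f \<in> PrimOmega 3"
      then show "finite (supp f)" by (intro prim_finite) (simp add: PrimOmega_def)
    qed
    then have "phi (psi :: 'a elem) = 0" by (simp add: ginv_def)
    then show False using phi_psi[where 'a='a] by simp
  qed
qed

end
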